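(* Let $M$ be a graded finitely generated graded multiplication $R$-module and $L$ a graded weakly $J_{gr}$-semiprime ideal of $R$ with $\mathrm{ann}_R(M)\subseteq L$. Then $LM$ is a graded weakly $J_{gr}$-semiprime submodule of $M$.
   Context: Standing conventions: $\Gamma$ is a group, $R=\bigoplus_{g\in\Gamma}R_g$ is a commutative $\Gamma$-graded ring with identity, and $M=\bigoplus_{g\in\Gamma}M_g$ is a unitary $\Gamma$-graded $R$-module. $h(R)$, $h(M)$ are the homogeneous elements. A submodule $U$ is graded if $U=\bigoplus_g(U\cap M_g)$; graded ideals are graded submodules of $R$. $M$ is graded finitely generated if $M=Ra_1+\dots+Ra_n$ with $a_i\in h(M)$; $M$ is a graded multiplication module if every graded submodule equals $KM$ for some graded ideal $K$ of $R$. $\mathrm{ann}_R(M)=\{r\in R: rM=0\}$. A graded submodule $U\neq N$ of a graded module $N$ is Gr-maximal if every graded submodule between $U$ and $N$ equals $U$ or $N$; $J_{gr}(N)$ is the intersection of all Gr-maximal submodules of $N$ ($=N$ if none); $J_{gr}(R)$ is this for $N=R$. A proper graded submodule $U$ of $M$ is graded weakly $J_{gr}$-semiprime if whenever $r_g\in h(R)$, $m_h\in h(M)$, $n\in\mathbb{Z}^+$ and $0\neq r_g^nm_h\in U$, then $r_gm_h\in U+J_{gr}(M)$; a graded ideal of $R$ is graded weakly $J_{gr}$-semiprime if it is so as a submodule of the graded $R$-module $R$. *)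

theory Defs
  imports Complex_Main
begin

(* Gamma is the type 'g (a group, written additively); R is the type 'r (commutative ring
   with 1); M is the type 'm with scalar action scale; gradings are Rg, Mg. *)

definition dsum :: "('g \<Rightarrow> 'a::comm_monoid_add set) \<Rightarrow> 'a set \<Rightarrow> bool" where
  "dsum A X \<longleftrightarrow> (\<forall>x\<in>X. \<exists>!c. (\<forall>g. c g \<in> A g) \<and> finite {g. c g \<noteq> 0}
                      \<and> x = (\<Sum>g\<in>{g. c g \<noteq> 0}. c g))"

definition gr_module :: "('r::comm_ring_1 \<Rightarrow> 'm::ab_group_add \<Rightarrow> 'm) \<Rightarrow>
    ('g::group_add \<Rightarrow> 'r set) \<Rightarrow> ('g \<Rightarrow> 'm set) \<Rightarrow> bool" where
  "gr_module scale Rg Mg \<longleftrightarrow> module scale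
     \<and> (\<forall>g. 0 \<in> Mg g \<and> (\<forall>a\<in>Mg g. \<forall>b\<in>Mg g. a - b \<in> Mg g))
     \<and> (\<forall>g h. \<forall>r\<in>Rg g. \<forall>m\<in>Mg h. scale r m \<in> Mg (g + h))
     \<and> dsum Mg UNIV"

definition gr_ring :: "('g::group_add \<Rightarrow> 'r::comm_ring_1 set) \<Rightarrow> bool" where
  "gr_ring Rg \<longleftrightarrow> gr_module (*) Rg Rg"

definition hom :: "('g \<Rightarrow> 'a set) \<Rightarrow> 'a set" where
  "hom A = (\<Union>g. A g)"

definition gr_submod :: "('r::comm_ring_1 \<Rightarrow> 'm::ab_group_add \<Rightarrow> 'm) \<Rightarrow> ('g \<Rightarrow> 'm set) \<Rightarrow> 'm set \<Rightarrow> bool" where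
  "gr_submod scale Mg U \<longleftrightarrow> module.subspace scale U \<and>
     dsum (\<lambda>g. U \<inter> Mg g) U"

definition gr_ideal :: "('g \<Rightarrow> 'r::comm_ring_1 set) \<Rightarrow> 'r set \<Rightarrow> bool" where
  "gr_ideal Rg I \<longleftrightarrow> gr_submod (*) Rg I"

definition prod_submod :: "('r::comm_ring_1 \<Rightarrow> 'm::ab_group_add \<Rightarrow> 'm) \<Rightarrow> 'r set \<Rightarrow> 'm set \<Rightarrow> 'm set" where
  "prod_submod scale K N = module.span scale {scale k m | k m. k \<in> K \<and> m \<in> N}"

definition gr_fin_gen :: "('r::comm_ring_1 \<Rightarrow> 'm::ab_group_add \<Rightarrow> 'm) \<Rightarrow> ('g \<Rightarrow> 'm set) \<Rightarrow> bool" where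
  "gr_fin_gen scale Mg \<longleftrightarrow> (\<exists>A. finite A \<and> A \<subseteq> hom Mg \<and> module.span scale A = UNIV)"

definition gr_mult_module :: "('r::comm_ring_1 \<Rightarrow> 'm::ab_group_add \<Rightarrow> 'm) \<Rightarrow>
    ('g \<Rightarrow> 'r set) \<Rightarrow> ('g \<Rightarrow> 'm set) \<Rightarrow> bool" where
  "gr_mult_module scale Rg Mg \<longleftrightarrow> (\<forall>U. gr_submod scale Mg U \<longrightarrow>
      (\<exists>K. gr_ideal Rg K \<and> U = prod_submod scale K UNIV))"

definition ann :: "('r::comm_ring_1 \<Rightarrow> 'm::ab_group_add \<Rightarrow> 'm) \<Rightarrow> 'r set" where
  "ann scale = {r. \<forall>m. scale r m = 0}"

definition gr_maximal :: "('r::comm_ring_1 \<Rightarrow> 'm::ab_group_add \<Rightarrow> 'm) \<Rightarrow> ('g \<Rightarrow> 'm set) \<Rightarrow> 'm set \<Rightarrow> bool" where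
  "gr_maximal scale Mg U \<longleftrightarrow> gr_submod scale Mg U \<and> U \<noteq> UNIV \<and>
     (\<forall>V. gr_submod scale Mg V \<and> U \<subseteq> V \<longrightarrow> V = U \<or> V = UNIV)"

definition J_gr :: "('r::comm_ring_1 \<Rightarrow> 'm::ab_group_add \<Rightarrow> 'm) \<Rightarrow> ('g \<Rightarrow> 'm set) \<Rightarrow> 'm set" where
  "J_gr scale Mg = (if \<exists>U. gr_maximal scale Mg U then \<Inter>{U. gr_maximal scale Mg U} else UNIV)"

definition gr_weakly_J_semiprime :: "('r::comm_ring_1 \<Rightarrow> 'm::ab_group_add \<Rightarrow> 'm) \<Rightarrow>
    ('g \<Rightarrow> 'r set) \<Rightarrow> ('g \<Rightarrow> 'm set) \<Rightarrow> 'm set \<Rightarrow> bool" where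
  "gr_weakly_J_semiprime scale Rg Mg U \<longleftrightarrow> gr_submod scale Mg U \<and> U \<noteq> UNIV \<and>
     (\<forall>r\<in>hom Rg. \<forall>m\<in>hom Mg. \<forall>n::nat. n \<ge> 1 \<longrightarrow>
        scale (r ^ n) m \<noteq> 0 \<longrightarrow> scale (r ^ n) m \<in> U \<longrightarrow>
        scale r m \<in> {u + j | u j. u \<in> U \<and> j \<in> J_gr scale Mg})"

definition gr_weakly_J_semiprime_ideal :: "('g \<Rightarrow> 'r::comm_ring_1 set) \<Rightarrow> 'r set \<Rightarrow> bool" where
  "gr_weakly_J_semiprime_ideal Rg L \<longleftrightarrow> gr_weakly_J_semiprime (*) Rg Rg L"

end

theory Submission
  imports Defs
begin


lemma polyid: "((b - l) * a - l') * (b - l) = b * b * (a::'a::comm_ring_1) - ((2 * (b * a) - l * a) * l + (b - l) * l')"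
  by (simp add: algebra_simps)

context module
begin

lemma nak:
  assumes X: "finite X"
    and L0: "0 \<in> L" and Ladd: "\<And>u v. u \<in> L \<Longrightarrow> v \<in> L \<Longrightarrow> u + v \<in> L"
    and Lmul: "\<And>c u. u \<in> L \<Longrightarrow> c * u \<in> L"
  shows "subspace K \<Longrightarrow> (\<forall>w\<in>X. \<exists>k\<in>K. \<exists>f. (\<forall>z\<in>X. f z \<in> L) \<and> scale a w = k + (\<Sum>z\<in>X. scale (f z) z))
     \<Longrightarrow> \<exists>e l. l \<in> L \<and> (\<forall>y\<in>span X. scale (a ^ e - l) y \<in> K)"
  using X
proof (induct X arbitrary: K rule: finite_induct)
  case empty
  then show ?case using L0 subspace_0 by (intro exI[of _ 0] exI[of _ 0]) auto
next
  case (insert x X K)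
  note sK = insert.prems(1)
  note H = insert.prems(2)
  let ?K' = "{k + scale s x | k s. k \<in> K}"
  have sK': "subspace ?K'"
  proof (rule subspaceI)
    show "0 \<in> ?K'" using subspace_0[OF sK] by (auto intro!: exI[of _ 0])
    show "u + v \<in> ?K'" if uv: "u \<in> ?K'" "v \<in> ?K'" for u v
    proof -
      obtain n1 s1 n2 s2 where "u = n1 + scale s1 x" "n1 \<in> K" "v = n2 + scale s2 x" "n2 \<in> K"
        using uv by blast
      then show ?thesis using subspace_add[OF sK]
        by (intro CollectI exI[of _ "n1 + n2"] exI[of _ "s1 + s2"]) (auto simp: algebra_simps)
    qed
    show "scale c u \<in> ?K'" if uW: "u \<in> ?K'" for c u
    proof -
      obtain n1 s1 where "u = n1 + scale s1 x" "n1 \<in> K" using uW by blast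
      then show ?thesis using subspace_scale[OF sK]
        by (intro CollectI exI[of _ "scale c n1"] exI[of _ "c * s1"]) (auto simp: algebra_simps)
    qed
  qed
  have H': "\<forall>w\<in>X. \<exists>k\<in>?K'. \<exists>f. (\<forall>z\<in>X. f z \<in> L) \<and> scale a w = k + (\<Sum>z\<in>X. scale (f z) z)"
  proof
    fix w assume w: "w \<in> X"
    then obtain k f where kf: "k \<in> K" "\<forall>z\<in>insert x X. f z \<in> L"
      "scale a w = k + (\<Sum>z\<in>insert x X. scale (f z) z)" using H by blast
    then have "scale a w = (k + scale (f x) x) + (\<Sum>z\<in>X. scale (f z) z)"
      using insert.hyps by (simp add: algebra_simps)
    moreover have "k + scale (f x) x \<in> ?K'" using kf by blast
    ultimately show "\<exists>k\<in>?K'. \<exists>f. (\<forall>z\<in>X. f z \<in> L) \<and> scale a w = k + (\<Sum>z\<in>X. scale (f z) z)"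
      using kf by blast
  qed
  obtain e l where el: "l \<in> L" "\<forall>y\<in>span X. scale (a ^ e - l) y \<in> ?K'"
    using insert.hyps(3)[OF sK' H'] by blast
  define p where "p = a ^ e - l"
  have pK': "scale p y \<in> ?K'" if y: "y \<in> span (insert x X)" for y
  proof -
    obtain t where t: "y - scale t x \<in> span X" using y span_breakdown_eq by blast
    then obtain k s where ks: "k \<in> K" "scale p (y - scale t x) = k + scale s x"
      using el(2) unfolding p_def by blast
    have "scale p y = k + scale (s + p * t) x"
      using ks(2) by (simp add: algebra_simps)
    then show ?thesis using ks(1) by blast
  qed
  have "\<forall>z\<in>insert x X. \<exists>ks. fst ks \<in> K \<and> scale p z = fst ks + scale (snd ks) x"
  proof
    fix z assume "z \<in> insert x X"
    then have "z \<in> span (insert x X)" by (rule span_base)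
    then obtain k s where "k \<in> K" "scale p z = k + scale s x" using pK' by blast
    then show "\<exists>ks. fst ks \<in> K \<and> scale p z = fst ks + scale (snd ks) x"
      by (intro exI[of _ "(k, s)"]) auto
  qed
  then obtain KS where KS: "\<And>z. z \<in> insert x X \<Longrightarrow> fst (KS z) \<in> K \<and> scale p z = fst (KS z) + scale (snd (KS z)) x"
    by metis
  obtain k0 f where k0f: "k0 \<in> K" "\<forall>z\<in>insert x X. f z \<in> L"
    "scale a x = k0 + (\<Sum>z\<in>insert x X. scale (f z) z)" using H by blast
  define l' where "l' = (\<Sum>z\<in>insert x X. f z * snd (KS z))"
  have Lsum: "(\<Sum>z\<in>S. g z) \<in> L" if "finite S" "\<And>z. z \<in> S \<Longrightarrow> g z \<in> L" for S g
    using that by (induct S rule: finite_induct) (auto intro: L0 Ladd)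
  have l'L: "l' \<in> L" unfolding l'_def
    using insert.hyps(1) k0f(2) Lmul
    by (intro Lsum) (auto simp: mult.commute[of "f _"])
  have "scale (p * a) x = scale p (scale a x)" by simp
  also have "\<dots> = scale p k0 + (\<Sum>z\<in>insert x X. scale p (scale (f z) z))"
    using k0f(3) by (simp only: scale_right_distrib scale_sum_right)
  also have "\<dots> = scale p k0 + (\<Sum>z\<in>insert x X. scale (f z) (scale p z))"
    by (rule arg_cong[where f="\<lambda>t. scale p k0 + t"], rule sum.cong, rule refl, rule scale_left_commute)
  also have "\<dots> = scale p k0 + (\<Sum>z\<in>insert x X. scale (f z) (fst (KS z)) + scale (f z * snd (KS z)) x)"
    using KS by (simp add: scale_right_distrib)
  also have "\<dots> = (scale p k0 + (\<Sum>z\<in>insert x X. scale (f z) (fst (KS z)))) + scale l' x"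
    unfolding l'_def by (simp add: sum.distrib scale_sum_left)
  finally have "scale (p * a - l') x = scale p k0 + (\<Sum>z\<in>insert x X. scale (f z) (fst (KS z)))"
    by (simp add: scale_left_diff_distrib)
  also have "\<dots> \<in> K"
    using KS k0f(1) by (intro subspace_add[OF sK] subspace_scale[OF sK] subspace_sum[OF sK]) auto
  finally have xK: "scale (p * a - l') x \<in> K" .
  define q where "q = (p * a - l') * p"
  have qK: "scale q y \<in> K" if y: "y \<in> span (insert x X)" for y
  proof -
    obtain k s where ks: "k \<in> K" "scale p y = k + scale s x" using pK'[OF y] by blast
    have "scale q y = scale (p * a - l') (scale p y)" unfolding q_def by simp
    also have "\<dots> = scale (p * a - l') k + scale (p * a - l') (scale s x)"
      using ks(2) by (simp only: scale_right_distrib)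
    also have "\<dots> = scale (p * a - l') k + scale s (scale (p * a - l') x)"
      by (simp only: scale_left_commute[of "p * a - l'" s])
    finally have "scale q y = scale (p * a - l') k + scale s (scale (p * a - l') x)" .
    then show ?thesis using ks(1) xK by (metis subspace_add subspace_scale sK)
  qed
  define l'' where "l'' = (2 * a ^ (e + 1) - l * a) * l + (a ^ e - l) * l'"
  have l''L: "l'' \<in> L" unfolding l''_def using el(1) l'L by (intro Ladd Lmul)
  have pw: "a ^ (2 * e + 1) = a ^ e * a ^ e * a" "a ^ (e + 1) = a ^ e * a"
    by (simp_all add: power_add mult_2)
  have "q = a ^ (2 * e + 1) - l''"
    unfolding q_def l''_def p_def pw by (rule polyid)
  then show ?case using qK l''L by blast
qed

lemma nak_app:
  assumes A: "finite A" "span A = UNIV"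
    and L0: "0 \<in> L" and Ladd: "\<And>u v. u \<in> L \<Longrightarrow> v \<in> L \<Longrightarrow> u + v \<in> L"
    and Lmul: "\<And>c u. u \<in> L \<Longrightarrow> c * u \<in> L"
    and a: "\<And>y. scale a y \<in> span {scale l m | l m. l \<in> L}"
  shows "\<exists>e l. l \<in> L \<and> (\<forall>y. scale (a ^ e - l) y = 0)"
proof -
  let ?LS = "{\<Sum>x\<in>A. scale (f x) x | f. \<forall>x\<in>A. f x \<in> L}"
  have sLS: "subspace ?LS"
  proof (rule subspaceI)
    show "0 \<in> ?LS" using L0 by (auto intro!: exI[of _ "\<lambda>_. 0"])
    show "u + v \<in> ?LS" if uv: "u \<in> ?LS" "v \<in> ?LS" for u v
    proof -
      obtain f g where "u = (\<Sum>x\<in>A. scale (f x) x)" "\<forall>x\<in>A. f x \<in> L"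
        "v = (\<Sum>x\<in>A. scale (g x) x)" "\<forall>x\<in>A. g x \<in> L" using uv by blast
      then show ?thesis using Ladd
        by (intro CollectI exI[of _ "\<lambda>x. f x + g x"]) (auto simp: sum.distrib scale_left_distrib)
    qed
    show "scale c u \<in> ?LS" if uW: "u \<in> ?LS" for c u
    proof -
      obtain f where "u = (\<Sum>x\<in>A. scale (f x) x)" "\<forall>x\<in>A. f x \<in> L" using uW by blast
      then show ?thesis using Lmul
        by (intro CollectI exI[of _ "\<lambda>x. c * f x"]) (auto simp: scale_sum_right)
    qed
  qed
  have "{scale l m | l m. l \<in> L} \<subseteq> ?LS"
  proof
    fix v assume "v \<in> {scale l m | l m. l \<in> L}"
    then obtain l m where lm: "v = scale l m" "l \<in> L" by blast
    have "m \<in> span A" using A by simp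
    then obtain u where "m = (\<Sum>x\<in>A. scale (u x) x)" using span_finite[OF A(1)] by auto
    then have "v = (\<Sum>x\<in>A. scale (l * u x) x)" using lm by (simp add: scale_sum_right)
    then show "v \<in> ?LS" using lm Lmul by (auto simp: mult.commute[of l])
  qed
  then have sub: "span {scale l m | l m. l \<in> L} \<subseteq> ?LS" using span_minimal sLS by blast
  have "\<forall>w\<in>A. \<exists>k\<in>{0}. \<exists>f. (\<forall>z\<in>A. f z \<in> L) \<and> scale a w = k + (\<Sum>z\<in>A. scale (f z) z)"
    using a sub by fastforce
  from nak[OF A(1) L0 Ladd Lmul subspace_single_0 this] A(2)
  show ?thesis by auto
qed

end




locale gdec =
  fixes A :: "'g \<Rightarrow> 'a::ab_group_add set"
  assumes A0: "0 \<in> A g"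
    and Adiff: "a \<in> A g \<Longrightarrow> b \<in> A g \<Longrightarrow> a - b \<in> A g"
    and Ads: "dsum A UNIV"
begin

lemma Aneg: "b \<in> A g \<Longrightarrow> - b \<in> A g"
  using Adiff[OF A0] by (metis diff_0)

lemma Aadd: "a \<in> A g \<Longrightarrow> b \<in> A g \<Longrightarrow> a + b \<in> A g"
  using Adiff[of a g "- b"] Aneg by simp

lemma Asum: "(\<And>i. i \<in> S \<Longrightarrow> f i \<in> A g) \<Longrightarrow> sum f S \<in> A g"
  by (induct S rule: infinite_finite_induct) (auto intro: Aadd A0)

definition isrep :: "'a \<Rightarrow> ('g \<Rightarrow> 'a) \<Rightarrow> bool" where
  "isrep x c \<longleftrightarrow> (\<forall>g. c g \<in> A g) \<and> finite {g. c g \<noteq> 0} \<and> x = sum c {g. c g \<noteq> 0}"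

definition rep :: "'a \<Rightarrow> 'g \<Rightarrow> 'a" where
  "rep x = (THE c. isrep x c)"

lemma ex1_rep: "\<exists>!c. isrep x c"
  using Ads unfolding dsum_def isrep_def by auto

lemma rep_isrep: "isrep x (rep x)"
  unfolding rep_def by (rule theI'[OF ex1_rep])

lemma rep_unique: "isrep x c \<Longrightarrow> rep x = c"
  unfolding rep_def by (rule the1_equality[OF ex1_rep])

lemma isrepI:
  assumes "\<And>g. c g \<in> A g" "finite S" "{g. c g \<noteq> 0} \<subseteq> S" "x = sum c S"
  shows "isrep x c"
proof -
  have "sum c {g. c g \<noteq> 0} = sum c S"
    by (rule sum.mono_neutral_left) (use assms in auto)
  moreover have "finite {g. c g \<noteq> 0}" using assms(2,3) by (rule finite_subset[rotated])
  ultimately show ?thesis using assms(1,4) unfolding isrep_def by simp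
qed

lemma repI:
  assumes "\<And>g. c g \<in> A g" "finite S" "{g. c g \<noteq> 0} \<subseteq> S" "x = sum c S"
  shows "rep x = c"
  using rep_unique[OF isrepI[OF assms]] .

lemma rep_in[simp, intro]: "rep x g \<in> A g"
  using rep_isrep unfolding isrep_def by auto

lemma rep_fin[simp, intro]: "finite {g. rep x g \<noteq> 0}"
  using rep_isrep unfolding isrep_def by auto

lemma rep_sum_eq: "sum (rep x) {g. rep x g \<noteq> 0} = x"
  using rep_isrep unfolding isrep_def by auto

lemma rep_sum_eqS:
  assumes "finite S" "{g. rep x g \<noteq> 0} \<subseteq> S"
  shows "sum (rep x) S = x"
proof -
  have "sum (rep x) {g. rep x g \<noteq> 0} = sum (rep x) S"
    by (rule sum.mono_neutral_left) (use assms in auto)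
  then show ?thesis using rep_sum_eq[of x] by simp
qed

lemma rep_zero: "rep 0 = (\<lambda>g. 0)"
  by (rule repI[where S="{}"]) (auto intro: A0)

lemma rep_add: "rep (x + y) = (\<lambda>g. rep x g + rep y g)"
proof (rule repI[where S="{g. rep x g \<noteq> 0} \<union> {g. rep y g \<noteq> 0}"])
  show "x + y = (\<Sum>g\<in>{g. rep x g \<noteq> 0} \<union> {g. rep y g \<noteq> 0}. rep x g + rep y g)"
  proof -
    have "sum (rep x) ({g. rep x g \<noteq> 0} \<union> {g. rep y g \<noteq> 0}) = x"
      by (rule rep_sum_eqS) auto
    moreover have "sum (rep y) ({g. rep x g \<noteq> 0} \<union> {g. rep y g \<noteq> 0}) = y"
      by (rule rep_sum_eqS) auto
    ultimately show ?thesis unfolding sum.distrib by simp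
  qed
qed (auto intro: Aadd)

lemma rep_neg: "rep (- x) = (\<lambda>g. - rep x g)"
proof (rule repI[where S="{g. rep x g \<noteq> 0}"])
  show "- x = (\<Sum>g\<in>{g. rep x g \<noteq> 0}. - rep x g)"
    using rep_sum_eq[of x] by (simp add: sum_negf)
qed (auto intro: Aneg)

lemma rep_diff: "rep (x - y) = (\<lambda>g. rep x g - rep y g)"
  using rep_add[of x "- y"] rep_neg[of y] by simp

lemma rep_sum: "finite I \<Longrightarrow> rep (sum f I) = (\<lambda>g. \<Sum>i\<in>I. rep (f i) g)"
  by (induct I rule: finite_induct) (auto simp: rep_zero rep_add)

lemma rep_hom: "x \<in> A h \<Longrightarrow> rep x = (\<lambda>g. if g = h then x else 0)"
  by (rule repI[where S="{h}"]) (auto intro: A0)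

lemma hom_rep: "x \<in> hom A \<Longrightarrow> \<exists>h. x \<in> A h"
  unfolding hom_def by auto

end


locale grm0 =
  fixes scale :: "'r::comm_ring_1 \<Rightarrow> 'm::ab_group_add \<Rightarrow> 'm"
    and Rg :: "'g::group_add \<Rightarrow> 'r set" and Mg :: "'g \<Rightarrow> 'm set"
  assumes grM: "gr_module scale Rg Mg" and grR: "gr_ring Rg"
begin

sublocale module scale
  using grM unfolding gr_module_def by auto

sublocale M: gdec Mg
  using grM unfolding gr_module_def by unfold_locales auto

sublocale R: gdec Rg
  using grR unfolding gr_ring_def gr_module_def by unfold_locales auto

sublocale RR: module "(*) :: 'r \<Rightarrow> 'r \<Rightarrow> 'r"
  using grR unfolding gr_ring_def gr_module_def by auto

lemma sc_hom: "r \<in> Rg g \<Longrightarrow> m \<in> Mg h \<Longrightarrow> scale r m \<in> Mg (g + h)"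
  using grM unfolding gr_module_def by auto

lemma mul_hom: "r \<in> Rg g \<Longrightarrow> s \<in> Rg h \<Longrightarrow> r * s \<in> Rg (g + h)"
  using grR unfolding gr_ring_def gr_module_def by auto

lemma rep_scale_hom:
  assumes m: "m \<in> Mg h"
  shows "M.rep (scale s m) = (\<lambda>k. scale (R.rep s (k - h)) m)"
proof (rule M.repI[where S="(\<lambda>g. g + h) ` {g. R.rep s g \<noteq> 0}"])
  show "scale (R.rep s (k - h)) m \<in> Mg k" for k
    using sc_hom[OF R.rep_in m, of s "k - h"] by simp
  show "finite ((\<lambda>g. g + h) ` {g. R.rep s g \<noteq> 0})" by simp
  show "{k. scale (R.rep s (k - h)) m \<noteq> 0} \<subseteq> (\<lambda>g. g + h) ` {g. R.rep s g \<noteq> 0}"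
  proof
    fix k assume "k \<in> {k. scale (R.rep s (k - h)) m \<noteq> 0}"
    then have "R.rep s (k - h) \<noteq> 0" by auto
    then show "k \<in> (\<lambda>g. g + h) ` {g. R.rep s g \<noteq> 0}"
      by (intro image_eqI[of _ _ "k - h"]) auto
  qed
  have inj: "inj_on (\<lambda>g. g + h) {g. R.rep s g \<noteq> 0}" by (auto simp: inj_on_def)
  have "(\<Sum>k\<in>(\<lambda>g. g + h) ` {g. R.rep s g \<noteq> 0}. scale (R.rep s (k - h)) m)
      = (\<Sum>g\<in>{g. R.rep s g \<noteq> 0}. scale (R.rep s g) m)"
    by (simp add: sum.reindex[OF inj])
  also have "\<dots> = scale (sum (R.rep s) {g. R.rep s g \<noteq> 0}) m"
    by (simp add: scale_sum_left)
  also have "\<dots> = scale s m" using R.rep_sum_eq[of s] by simp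
  finally show "scale s m = (\<Sum>k\<in>(\<lambda>g. g + h) ` {g. R.rep s g \<noteq> 0}. scale (R.rep s (k - h)) m)"
    by simp
qed

lemma rep_scale:
  "M.rep (scale s z) g = (\<Sum>h\<in>{h. M.rep z h \<noteq> 0}. scale (R.rep s (g - h)) (M.rep z h))"
proof -
  have "scale s z = (\<Sum>h\<in>{h. M.rep z h \<noteq> 0}. scale s (M.rep z h))"
    unfolding scale_sum_right[symmetric] M.rep_sum_eq ..
  then have "M.rep (scale s z) g = (\<Sum>h\<in>{h. M.rep z h \<noteq> 0}. M.rep (scale s (M.rep z h)) g)"
    using M.rep_sum[of "{h. M.rep z h \<noteq> 0}"] by simp
  also have "\<dots> = (\<Sum>h\<in>{h. M.rep z h \<noteq> 0}. scale (R.rep s (g - h)) (M.rep z h))"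
    by (simp add: rep_scale_hom[OF M.rep_in])
  finally show ?thesis .
qed

lemma gr_submod_iff:
  "gr_submod scale Mg U \<longleftrightarrow> subspace U \<and> (\<forall>x\<in>U. \<forall>g. M.rep x g \<in> U)"
proof
  assume a: "gr_submod scale Mg U"
  then have "subspace U" unfolding gr_submod_def by auto
  moreover have "M.rep x g \<in> U" if "x \<in> U" for x g
  proof -
    obtain c where c: "\<forall>g. c g \<in> U \<inter> Mg g" "finite {g. c g \<noteq> 0}" "x = sum c {g. c g \<noteq> 0}"
      using a \<open>x \<in> U\<close> unfolding gr_submod_def dsum_def by blast
    then have "M.isrep x c" unfolding M.isrep_def by auto
    then have "M.rep x = c" by (rule M.rep_unique)
    then show ?thesis using c by auto
  qed
  ultimately show "subspace U \<and> (\<forall>x\<in>U. \<forall>g. M.rep x g \<in> U)" by auto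
next
  assume a: "subspace U \<and> (\<forall>x\<in>U. \<forall>g. M.rep x g \<in> U)"
  have "dsum (\<lambda>g. U \<inter> Mg g) U"
    unfolding dsum_def
  proof
    fix x assume x: "x \<in> U"
    show "\<exists>!c. (\<forall>g. c g \<in> U \<inter> Mg g) \<and> finite {g. c g \<noteq> 0} \<and> x = sum c {g. c g \<noteq> 0}"
    proof (rule ex1I[of _ "M.rep x"])
      show "(\<forall>g. M.rep x g \<in> U \<inter> Mg g) \<and> finite {g. M.rep x g \<noteq> 0} \<and> x = sum (M.rep x) {g. M.rep x g \<noteq> 0}"
        using a x M.rep_sum_eq[of x] by auto
    next
      fix c assume "(\<forall>g. c g \<in> U \<inter> Mg g) \<and> finite {g. c g \<noteq> 0} \<and> x = sum c {g. c g \<noteq> 0}"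
      then have "M.isrep x c" unfolding M.isrep_def by auto
      then show "c = M.rep x" using M.rep_unique by auto
    qed
  qed
  then show "gr_submod scale Mg U" using a unfolding gr_submod_def by auto
qed

lemma gr_sum_cyc:
  assumes N: "gr_submod scale Mg N" and z: "z \<in> Mg k"
  shows "gr_submod scale Mg {n + scale s z | n s. n \<in> N}"
proof -
  have sN: "subspace N" using N gr_submod_iff by auto
  let ?W = "{n + scale s z | n s. n \<in> N}"
  have "subspace ?W"
  proof (rule subspaceI)
    show "0 \<in> ?W" using subspace_0[OF sN] by (auto intro!: exI[of _ 0])
    show "x + y \<in> ?W" if xy: "x \<in> ?W" "y \<in> ?W" for x y
    proof -
      obtain n1 s1 n2 s2 where "x = n1 + scale s1 z" "n1 \<in> N" "y = n2 + scale s2 z" "n2 \<in> N"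
        using xy by blast
      then show ?thesis using subspace_add[OF sN]
        by (intro CollectI exI[of _ "n1 + n2"] exI[of _ "s1 + s2"]) (auto simp: algebra_simps)
    qed
    show "scale c x \<in> ?W" if xW: "x \<in> ?W" for c x
    proof -
      obtain n1 s1 where "x = n1 + scale s1 z" "n1 \<in> N" using xW by blast
      then show ?thesis using subspace_scale[OF sN]
        by (intro CollectI exI[of _ "scale c n1"] exI[of _ "c * s1"]) (auto simp: algebra_simps)
    qed
  qed
  moreover have "M.rep x g \<in> ?W" if xW: "x \<in> ?W" for x g
  proof -
    obtain n1 s1 where x: "x = n1 + scale s1 z" "n1 \<in> N" using xW by blast
    have "M.rep x g = M.rep n1 g + scale (R.rep s1 (g - k)) z"
      using x by (simp add: M.rep_add rep_scale_hom[OF z])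
    moreover have "M.rep n1 g \<in> N" using N x gr_submod_iff by auto
    ultimately show ?thesis by auto
  qed
  ultimately show ?thesis using gr_submod_iff by auto
qed

end


locale grm = grm0
begin

sublocale RM: grm0 "(*)" Rg Rg
  by unfold_locales (use grR in \<open>simp_all add: gr_ring_def\<close>)

lemma one_hom: "1 \<in> Rg 0"
proof -
  have key: "R.rep 1 g * x = 0" if g: "g \<noteq> 0" and x: "x \<in> Rg h" for g h x
  proof -
    have e1: "R.rep (1 * x) (g + h) = R.rep 1 (g + h - h) * x"
      by (simp only: RM.rep_scale_hom[OF x])
    have e2: "g + h - h = g" by (rule add_diff_cancel)
    have gh: "g + h \<noteq> h"
    proof
      assume "g + h = h"
      then have "g + h - h = h - h" by (rule arg_cong)
      then show False using g by simp
    qed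
    have e3: "R.rep x (g + h) = 0" unfolding R.rep_hom[OF x] using gh by (simp only: if_False)
    from e1 e3 show ?thesis unfolding e2 mult_1_left by simp
  qed
  have z: "R.rep 1 g = 0" if g: "g \<noteq> 0" for g
  proof -
    have "R.rep 1 g = R.rep 1 g * sum (R.rep 1) {h. R.rep 1 h \<noteq> 0}"
      unfolding R.rep_sum_eq[of 1] by (rule mult_1_right[symmetric])
    also have "\<dots> = (\<Sum>h\<in>{h. R.rep 1 h \<noteq> 0}. R.rep 1 g * R.rep 1 h)"
      by (rule sum_distrib_left)
    also have "\<dots> = 0" by (rule sum.neutral) (use key[OF g R.rep_in] in blast)
    finally show ?thesis .
  qed
  have sub: "{h. R.rep 1 h \<noteq> 0} \<subseteq> {0}" using z by blast
  have "sum (R.rep 1) {0} = 1"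
    by (rule R.rep_sum_eqS[OF _ sub]) simp
  then have "R.rep 1 0 = 1" by simp
  then show ?thesis using R.rep_in[of 1 0] by simp
qed

lemma ideal_one: "RR.subspace V \<Longrightarrow> 1 \<in> V \<Longrightarrow> V = UNIV"
  using RR.subspace_scale[of V 1] by auto

lemma colon_gr:
  assumes N: "gr_submod scale Mg N" and y: "y \<in> Mg h"
  shows "gr_submod (*) Rg {s. scale s y \<in> N}"
proof -
  have sN: "subspace N" using N gr_submod_iff by auto
  have "RR.subspace {s. scale s y \<in> N}"
    by (rule RR.subspaceI)
      (auto simp: subspace_0[OF sN] scale_left_distrib subspace_add[OF sN]
        scale_scale[symmetric] subspace_scale[OF sN] simp del: scale_scale)
  moreover have "R.rep s g \<in> {s. scale s y \<in> N}" if "scale s y \<in> N" for s g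
  proof -
    have "M.rep (scale s y) (g + h) = scale (R.rep s g) y"
      using rep_scale_hom[OF y, of s] by simp
    moreover have "M.rep (scale s y) (g + h) \<in> N" using N that unfolding gr_submod_iff by blast
    ultimately show ?thesis by simp
  qed
  ultimately show ?thesis using RM.gr_submod_iff by auto
qed

lemma gr_max_colon:
  assumes N: "gr_maximal scale Mg N" and y: "y \<in> Mg h" and yN: "y \<notin> N"
  shows "gr_maximal (*) Rg {s. scale s y \<in> N}"
proof -
  let ?P = "{s. scale s y \<in> N}"
  have gN: "gr_submod scale Mg N" using N unfolding gr_maximal_def by auto
  have sN: "subspace N" using gN gr_submod_iff by auto
  have gP: "gr_submod (*) Rg ?P" by (rule colon_gr[OF gN y])
  have one: "1 \<notin> ?P" using yN by simp
  have PU: "?P \<noteq> UNIV" using one by blast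
  have "V = ?P \<or> V = UNIV" if V: "gr_submod (*) Rg V" "?P \<subseteq> V" for V
  proof (cases "V = ?P")
    case False
    then obtain q where q: "q \<in> V" "q \<notin> ?P" using V by auto
    have sV: "RR.subspace V" using V RM.gr_submod_iff by auto
    have sP: "RR.subspace ?P" using gP RM.gr_submod_iff by auto
    obtain g where g: "R.rep q g \<notin> ?P"
    proof (rule ccontr)
      assume "\<not> thesis"
      then have "\<forall>g. R.rep q g \<in> ?P" using that by blast
      then have "sum (R.rep q) {g. R.rep q g \<noteq> 0} \<in> ?P"
        by (intro RR.subspace_sum[OF sP]) auto
      then show False using q R.rep_sum_eq[of q] by simp
    qed
    let ?q = "R.rep q g"
    have qV: "?q \<in> V" using V q RM.gr_submod_iff by auto
    let ?z = "scale ?q y"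
    have zh: "?z \<in> Mg (g + h)" using sc_hom[OF R.rep_in y] .
    let ?W = "{n + scale s ?z | n s. n \<in> N}"
    have gW: "gr_submod scale Mg ?W" by (rule gr_sum_cyc[OF gN zh])
    have NW: "N \<subseteq> ?W"
    proof
      fix v assume "v \<in> N"
      then show "v \<in> ?W" by (intro CollectI exI[of _ v] exI[of _ 0]) simp
    qed
    have "?z \<in> ?W" by (intro CollectI exI[of _ 0] exI[of _ 1]) (simp add: subspace_0[OF sN])
    moreover have "?z \<notin> N" using g by simp
    ultimately have WN: "?W \<noteq> N" by blast
    have mx: "\<forall>V. gr_submod scale Mg V \<and> N \<subseteq> V \<longrightarrow> V = N \<or> V = UNIV"
      using N unfolding gr_maximal_def by blast
    then have "?W = N \<or> ?W = UNIV" using gW NW by blast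
    then have WU: "?W = UNIV" using WN by blast
    have "y \<in> ?W" unfolding WU by (rule UNIV_I)
    then obtain n s where ns: "y = n + scale s ?z" "n \<in> N" by blast
    have "scale (1 - s * ?q) y = n" using ns(1) by (simp add: algebra_simps)
    then have "1 - s * ?q \<in> ?P" using ns by simp
    then have "1 - s * ?q \<in> V" using V by auto
    moreover have "s * ?q \<in> V" using RR.subspace_scale[OF sV qV] .
    ultimately have "1 \<in> V" using RR.subspace_add[OF sV] by fastforce
    then show ?thesis using ideal_one[OF sV] by auto
  qed simp
  then show ?thesis using gP PU unfolding gr_maximal_def by auto
qed


lemma J_scale:
  assumes j: "j \<in> J_gr (*) Rg"
  shows "scale j y \<in> J_gr scale Mg"
proof (cases "\<exists>U. gr_maximal scale Mg U")
  case False then show ?thesis by (simp add: J_gr_def)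
next
  case True
  have "scale j y \<in> N" if N: "gr_maximal scale Mg N" for N
  proof -
    have gN: "gr_submod scale Mg N" using N unfolding gr_maximal_def by auto
    have sN: "subspace N" using gN gr_submod_iff by auto
    have homc: "scale j z \<in> N" if z: "z \<in> Mg h" for z h
    proof (cases "z \<in> N")
      case True then show ?thesis using subspace_scale[OF sN] by auto
    next
      case False
      have P: "gr_maximal (*) Rg {s. scale s z \<in> N}" by (rule gr_max_colon[OF N z False])
      then have "J_gr (*) Rg \<subseteq> {s. scale s z \<in> N}"
        unfolding J_gr_def by auto
      then show ?thesis using j by auto
    qed
    have "scale j y = scale j (sum (M.rep y) {h. M.rep y h \<noteq> 0})"
      unfolding M.rep_sum_eq ..
    also have "\<dots> = (\<Sum>h\<in>{h. M.rep y h \<noteq> 0}. scale j (M.rep y h))"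
      by (rule scale_sum_right)
    also have "\<dots> \<in> N" by (rule subspace_sum[OF sN]) (rule homc[OF M.rep_in])
    finally show ?thesis .
  qed
  then show ?thesis using True unfolding J_gr_def by auto
qed

lemma nil_J:
  assumes x: "x \<in> Rg h" and xn: "x ^ n = 0"
  shows "x \<in> J_gr (*) Rg"
proof (cases "\<exists>U. gr_maximal (*) Rg U")
  case False then show ?thesis by (simp add: J_gr_def)
next
  case True
  have "x \<in> P" if P: "gr_maximal (*) Rg P" for P
  proof (rule ccontr)
    assume xP: "x \<notin> P"
    have gP: "gr_submod (*) Rg P" using P unfolding gr_maximal_def by auto
    have sP: "RR.subspace P" using gP RM.gr_submod_iff by auto
    let ?W = "{p + s * x | p s. p \<in> P}"
    have gW: "gr_submod (*) Rg ?W" using RM.gr_sum_cyc[OF gP x] by simp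
    have PW: "P \<subseteq> ?W"
    proof
      fix v assume "v \<in> P"
      then show "v \<in> ?W" by (intro CollectI exI[of _ v] exI[of _ 0]) simp
    qed
    have "x \<in> ?W" by (intro CollectI exI[of _ 0] exI[of _ 1]) (simp add: RR.subspace_0[OF sP])
    then have WP: "?W \<noteq> P" using xP by blast
    have mx: "\<forall>V. gr_submod (*) Rg V \<and> P \<subseteq> V \<longrightarrow> V = P \<or> V = UNIV"
      using P unfolding gr_maximal_def by blast
    then have "?W = P \<or> ?W = UNIV" using gW PW by blast
    then have WU: "?W = UNIV" using WP by blast
    have "1 \<in> ?W" unfolding WU by (rule UNIV_I)
    then obtain p s where ps: "1 = p + s * x" "p \<in> P" by blast
    have "(1 - s * x) * (\<Sum>i<n. (s * x) ^ i) = 1 - (s * x) ^ n"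
      by (rule one_diff_power_eq[symmetric])
    also have "\<dots> = 1" using xn by (simp add: power_mult_distrib)
    moreover have "p = 1 - s * x"
    proof -
      have "1 - s * x = (p + s * x) - s * x" by (simp only: ps(1)[symmetric])
      then show ?thesis by simp
    qed
    ultimately have "p * (\<Sum>i<n. (s * x) ^ i) = 1" by simp
    moreover have "p * (\<Sum>i<n. (s * x) ^ i) \<in> P"
      unfolding mult.commute[of p] by (rule RR.subspace_scale[OF sP ps(2)])
    ultimately have "1 \<in> P" by simp
    then show False using ideal_one[OF sP] P unfolding gr_maximal_def by auto
  qed
  then show ?thesis using True unfolding J_gr_def by auto
qed

end




context grm
begin

lemma ideal_props:
  assumes "gr_ideal Rg L"
  shows "0 \<in> L" "\<And>u v. u \<in> L \<Longrightarrow> v \<in> L \<Longrightarrow> u + v \<in> L" "\<And>c u. u \<in> L \<Longrightarrow> c * u \<in> L"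
    "\<And>u g. u \<in> L \<Longrightarrow> R.rep u g \<in> L" "RR.subspace L"
  using assms RM.gr_submod_iff[of L] unfolding gr_ideal_def
  by (auto intro: RR.subspace_0 RR.subspace_add RR.subspace_scale)

lemma LM_gr:
  assumes L: "gr_ideal Rg L"
  shows "gr_submod scale Mg (prod_submod scale L UNIV)"
proof -
  let ?G = "{scale k m | k m. k \<in> L \<and> m \<in> (UNIV::'b set)}"
  let ?T = "{x. \<forall>g. M.rep x g \<in> span ?G}"
  have sT: "subspace ?T"
  proof (rule subspaceI)
    show "0 \<in> ?T" by (simp add: M.rep_zero span_zero)
    show "x + y \<in> ?T" if "x \<in> ?T" "y \<in> ?T" for x y
      using that by (simp add: M.rep_add span_add)
    show "scale c x \<in> ?T" if "x \<in> ?T" for c x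
      using that by (simp add: rep_scale span_sum span_scale)
  qed
  have "?G \<subseteq> ?T"
  proof
    fix v assume "v \<in> ?G"
    then obtain k m where km: "v = scale k m" "k \<in> L" by blast
    have "M.rep v g \<in> span ?G" for g
      unfolding km(1) rep_scale
      by (intro span_sum span_base) (use km(2) ideal_props(4)[OF L] in blast)
    then show "v \<in> ?T" by simp
  qed
  then have "span ?G \<subseteq> ?T" using span_minimal sT by blast
  then show ?thesis unfolding gr_submod_iff prod_submod_def by auto
qed

lemma J_sub: "subspace (J_gr scale Mg)"
  unfolding J_gr_def gr_maximal_def using gr_submod_iff
  by (auto intro!: subspace_Inter)

theorem main:
  assumes fg: "gr_fin_gen scale Mg" and mult: "gr_mult_module scale Rg Mg"
    and wL: "gr_weakly_J_semiprime_ideal Rg L" and ann: "ann scale \<subseteq> L"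
  shows "gr_weakly_J_semiprime scale Rg Mg (prod_submod scale L UNIV)"
proof -
  let ?U = "prod_submod scale L UNIV"
  have gL: "gr_ideal Rg L" and LU: "L \<noteq> UNIV"
    and wc: "\<And>r x n. r \<in> hom Rg \<Longrightarrow> x \<in> hom Rg \<Longrightarrow> n \<ge> 1 \<Longrightarrow> r ^ n * x \<noteq> 0 \<Longrightarrow> r ^ n * x \<in> L
        \<Longrightarrow> r * x \<in> {u + j | u j. u \<in> L \<and> j \<in> J_gr (*) Rg}"
    using wL unfolding gr_weakly_J_semiprime_ideal_def gr_weakly_J_semiprime_def gr_ideal_def
    by blast+
  note Lp = ideal_props[OF gL]
  obtain A where A: "finite A" "span A = UNIV" using fg unfolding gr_fin_gen_def by blast
  have sU: "subspace ?U" unfolding prod_submod_def by simp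
  have nakc: "\<exists>e. a ^ e \<in> L" if a: "\<And>y. scale a y \<in> ?U" for a
  proof -
    have "\<And>y. scale a y \<in> span {scale l m | l m. l \<in> L}"
      using a unfolding prod_submod_def by simp
    from nak_app[OF A Lp(1) Lp(2) Lp(3) this]
    obtain e l where el: "l \<in> L" "\<forall>y. scale (a ^ e - l) y = 0" by blast
    then have "a ^ e - l \<in> L" using ann unfolding ann_def by auto
    then have "(a ^ e - l) + l \<in> L" using Lp(2) el(1) by blast
    then show ?thesis by auto
  qed
  have UU: "?U \<noteq> UNIV"
  proof
    assume "?U = UNIV"
    then obtain e where "1 ^ e \<in> L" using nakc[of 1] by auto
    then show False using ideal_one[OF Lp(5)] LU by simp
  qed
  let ?W = "{u + j | u j. u \<in> ?U \<and> j \<in> J_gr scale Mg}"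
  have sW: "subspace ?W"
  proof (rule subspaceI)
    show "0 \<in> ?W" using subspace_0[OF sU] subspace_0[OF J_sub] by force
    show "x + y \<in> ?W" if xy: "x \<in> ?W" "y \<in> ?W" for x y
    proof -
      obtain u1 j1 u2 j2 where "x = u1 + j1" "u1 \<in> ?U" "j1 \<in> J_gr scale Mg"
        "y = u2 + j2" "u2 \<in> ?U" "j2 \<in> J_gr scale Mg" using xy by blast
      then show ?thesis using subspace_add[OF sU] subspace_add[OF J_sub]
        by (intro CollectI exI[of _ "u1 + u2"] exI[of _ "j1 + j2"]) (auto simp: algebra_simps)
    qed
    show "scale c x \<in> ?W" if xW: "x \<in> ?W" for c x
    proof -
      obtain u1 j1 where "x = u1 + j1" "u1 \<in> ?U" "j1 \<in> J_gr scale Mg" using xW by blast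
      then show ?thesis using subspace_scale[OF sU] subspace_scale[OF J_sub]
        by (intro CollectI exI[of _ "scale c u1"] exI[of _ "scale c j1"]) (auto simp: algebra_simps)
    qed
  qed
  have cond: "scale r m \<in> ?W"
    if r: "r \<in> hom Rg" and m: "m \<in> hom Mg" and n: "n \<ge> 1" and rnm: "scale (r ^ n) m \<in> ?U"
    for r m and n :: nat
  proof -
    obtain g where rg: "r \<in> Rg g" using r unfolding hom_def by auto
    obtain h where mh: "m \<in> Mg h" using m unfolding hom_def by auto
    let ?Rm = "{x + scale s m | x s. x \<in> {0}}"
    have g0: "gr_submod scale Mg {0}" using gr_submod_iff by (simp add: M.rep_zero)
    have gRm: "gr_submod scale Mg ?Rm" by (rule gr_sum_cyc[OF g0 mh])
    obtain I where I: "gr_ideal Rg I" "?Rm = prod_submod scale I UNIV"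
      using mult gRm unfolding gr_mult_module_def by blast
    note Ip = ideal_props[OF I(1)]
    have claimA: "r * i \<in> {u + j | u j. u \<in> L \<and> j \<in> J_gr (*) Rg}" if i: "i \<in> I" "i \<in> Rg d" for i d
    proof -
      let ?a = "r ^ n * i"
      have "scale ?a y \<in> ?U" for y
      proof -
        have "scale i y \<in> prod_submod scale I UNIV"
          unfolding prod_submod_def using i by (intro span_base) blast
        then obtain s where s: "scale i y = scale s m" using I(2) by auto
        have "scale ?a y = scale (r ^ n) (scale i y)" by simp
        also have "\<dots> = scale (r ^ n) (scale s m)" by (simp only: s)
        also have "\<dots> = scale s (scale (r ^ n) m)" by (simp add: mult.commute)
        finally have "scale ?a y = scale s (scale (r ^ n) m)" .
        then show ?thesis using subspace_scale[OF sU rnm] by simp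
      qed
      then obtain e where e: "?a ^ e \<in> L" using nakc by blast
      have e0: "e \<noteq> 0" using e ideal_one[OF Lp(5)] LU by (cases "e = 0") auto
      have ne: "e + (n * e - e) = n * e" using n by simp
      have "(r * i) ^ (n * e) = ?a ^ e * i ^ (n * e - e)"
      proof -
        have "(r * i) ^ (n * e) = r ^ (n * e) * i ^ (n * e)" by (rule power_mult_distrib)
        also have "i ^ (n * e) = i ^ e * i ^ (n * e - e)"
          unfolding power_add[symmetric] ne ..
        also have "r ^ (n * e) = (r ^ n) ^ e" by (rule power_mult)
        also have "?a ^ e = (r ^ n) ^ e * i ^ e" by (rule power_mult_distrib)
        ultimately show ?thesis by (simp only: mult.assoc)
      qed
      then have riL: "(r * i) ^ (n * e) \<in> L" using Lp(3)[OF e] by (simp add: mult.commute)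
      have rih: "r * i \<in> hom Rg" using mul_hom[OF rg i(2)] unfolding hom_def by auto
      have oneh: "1 \<in> hom Rg" using one_hom unfolding hom_def by auto
      have ne1: "n * e \<ge> 1" using n e0 by simp
      show ?thesis
      proof (cases "(r * i) ^ (n * e) = 0")
        case True
        then have "r * i \<in> J_gr (*) Rg" using nil_J[OF mul_hom[OF rg i(2)]] by blast
        then show ?thesis using Lp(1) by force
      next
        case False
        then show ?thesis using wc[OF rih oneh ne1] riL by simp
      qed
    qed
    have claimC: "scale (r * i) y \<in> ?W" if i: "i \<in> I" for i y
    proof -
      have "r * i = (\<Sum>d\<in>{d. R.rep i d \<noteq> 0}. r * R.rep i d)"
        using R.rep_sum_eq[of i] by (metis sum_distrib_left)
      then have "scale (r * i) y = (\<Sum>d\<in>{d. R.rep i d \<noteq> 0}. scale (r * R.rep i d) y)"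
        by (simp add: scale_sum_left)
      also have "\<dots> \<in> ?W"
      proof (rule subspace_sum[OF sW])
        fix d
        have "r * R.rep i d \<in> {u + j | u j. u \<in> L \<and> j \<in> J_gr (*) Rg}"
          using claimA[OF Ip(4)[OF i] R.rep_in] .
        then obtain u j where uj: "r * R.rep i d = u + j" "u \<in> L" "j \<in> J_gr (*) Rg" by blast
        have "scale u y \<in> ?U" unfolding prod_submod_def using uj(2) by (intro span_base) blast
        moreover have "scale j y \<in> J_gr scale Mg" using J_scale[OF uj(3)] .
        ultimately show "scale (r * R.rep i d) y \<in> ?W" using uj(1) by (auto simp: scale_left_distrib)
      qed
      finally show ?thesis .
    qed
    let ?T = "{x. scale r x \<in> ?W}"
    have sT: "subspace ?T"
    proof (rule subspaceI)
      have "scale r 0 \<in> ?W" unfolding scale_zero_right by (rule subspace_0[OF sW])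
      then show "0 \<in> ?T" by blast
      show "x + y \<in> ?T" if "x \<in> ?T" "y \<in> ?T" for x y
      proof -
        have "scale r x + scale r y \<in> ?W" using that by (intro subspace_add[OF sW]) auto
        then show ?thesis unfolding mem_Collect_eq scale_right_distrib .
      qed
      show "scale c x \<in> ?T" if "x \<in> ?T" for c x
      proof -
        have "scale r x \<in> ?W" using that by blast
        then have "scale c (scale r x) \<in> ?W" by (rule subspace_scale[OF sW])
        then show ?thesis unfolding mem_Collect_eq scale_left_commute[of r c] .
      qed
    qed
    have gen: "{scale k y | k y. k \<in> I \<and> y \<in> (UNIV::'b set)} \<subseteq> ?T"
    proof
      fix v assume "v \<in> {scale k y | k y. k \<in> I \<and> y \<in> (UNIV::'b set)}"
      then obtain k y where ky: "v = scale k y" "k \<in> I" by blast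
      have "scale r v = scale (r * k) y" unfolding ky(1) by simp
      then have "scale r v \<in> ?W" using claimC[OF ky(2), of y] by simp
      then show "v \<in> ?T" by (rule CollectI)
    qed
    have PT: "prod_submod scale I UNIV \<subseteq> ?T"
      unfolding prod_submod_def[of scale I UNIV] by (rule span_minimal[OF gen sT])
    have "m \<in> ?Rm" by (intro CollectI exI[of _ 0] exI[of _ 1]) simp
    then have "m \<in> prod_submod scale I UNIV" unfolding I(2) .
    then have "m \<in> ?T" using PT by (rule subsetD[rotated])
    then show ?thesis by (rule CollectD)
  qed
  have cond': "\<forall>r\<in>hom Rg. \<forall>m\<in>hom Mg. \<forall>n::nat. n \<ge> 1 \<longrightarrow>
        scale (r ^ n) m \<noteq> 0 \<longrightarrow> scale (r ^ n) m \<in> ?U \<longrightarrow> scale r m \<in> ?W"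
  proof (intro ballI allI impI)
    fix r m and n :: nat
    assume "r \<in> hom Rg" "m \<in> hom Mg" "n \<ge> 1" "scale (r ^ n) m \<in> ?U"
    then show "scale r m \<in> ?W" by (rule cond)
  qed
  show ?thesis
    unfolding gr_weakly_J_semiprime_def
    using LM_gr[OF gL] UU cond' by (intro conjI)
qed

end


theorem theorem2p17:
  fixes scale :: "'r::comm_ring_1 \<Rightarrow> 'm::ab_group_add \<Rightarrow> 'm"
    and Rg :: "'g::group_add \<Rightarrow> 'r set" and Mg :: "'g \<Rightarrow> 'm set"
    and L :: "'r set"
  assumes "gr_ring Rg"
    and "gr_module scale Rg Mg"
    and "gr_fin_gen scale Mg"
    and "gr_mult_module scale Rg Mg"
    and "gr_weakly_J_semiprime_ideal Rg L"
    and "ann scale \<subseteq> L"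
  shows "gr_weakly_J_semiprime scale Rg Mg (prod_submod scale L UNIV)"
proof -
  interpret grm scale Rg Mg
    by unfold_locales (fact assms(2), fact assms(1))
  show ?thesis by (rule main[OF assms(3) assms(4) assms(5) assms(6)])
qed

end
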